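(* Let $A$ be the $8$-dimensional Hopf algebra of the context and $\tau$ a Hopf automorphism of $A$, identified with the matrix $\begin{pmatrix}a&b\\c&d\end{pmatrix}$ by $\tau(x)=ax+by$, $\tau(y)=cx+dy$ (and $\tau(g)=g$). (1) If $\tau^2=1$ and $m$ is a positive even integer, then $\nu_{m,\tau}(A)=\frac{m^2}{2}\big(1+\det(\tau)\big)$; consequently $\nu_{m,\tau}(A)=m^2$ if $\det(\tau)=1$ and $\nu_{m,\tau}(A)=0$ if $\det(\tau)=-1$. (2) If $\tau^3=1$, then $\nu_{3,\tau}(A)=(\mathrm{Tr}(\tau)+\det(\tau))^2+(\mathrm{Tr}(\tau)+1)(1-\det(\tau))$; consequently $\nu_{3,\tau}(A)=9$ if $\tau=\mathrm{id}$ and $\nu_{3,\tau}(A)=0$ if $\tau\neq\mathrm{id}$.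
   Context: $k$ is algebraically closed of characteristic $0$. $A=k\langle g,x,y\mid gx=-xg,\ gy=-yg,\ xy=-yx,\ g^2=1,\ x^2=y^2=0\rangle$ with $g$ grouplike, $\Delta(x)=x\otimes g+1\otimes x$, $\Delta(y)=y\otimes g+1\otimes y$, $\varepsilon(x)=\varepsilon(y)=0$, $S(g)=g$, $S(x)=gx$, $S(y)=gy$. Every Hopf automorphism of $A$ fixes $g$ and acts linearly and invertibly on $\mathrm{span}(x,y)$. For a Hopf automorphism $\tau$ whose order divides $m$, define $P_{m-1,\tau}(h)=\sum(\tau^{m-1}\cdot h_1)(\tau^{m-2}\cdot h_2)\cdots(\tau\cdot h_{m-1})$ (Sweedler notation) and the twisted Frobenius–Schur indicator $\nu_{m,\tau}(A)=\mathrm{Tr}(S\circ P_{m-1,\tau})$, the trace of the linear map $S\circ P_{m-1,\tau}:A\to A$. $\mathrm{Tr}(\tau)=a+d$ and $\det(\tau)=ad-bc$. *)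

theory Defs
  imports "HOL-Computational_Algebra.Polynomial"
begin

text \<open>The 8-dimensional Hopf algebra A with basis the monomials g^i x^j y^k,
  i,j,k in {0,1}.  A basis index (i,j,k) is encoded as a triple of booleans
  (True = exponent 1).\<close>

type_synonym bidx = "bool \<times> bool \<times> bool"
type_synonym 'k hA = "bidx \<Rightarrow> 'k"
type_synonym 'k hAA = "bidx \<times> bidx \<Rightarrow> 'k"

definition ex :: "bool \<Rightarrow> nat" where "ex b = (if b then 1 else 0)"

definition bvec :: "bidx \<Rightarrow> 'k::field hA" where
  "bvec b = (\<lambda>b'. if b' = b then 1 else 0)"

definition oneA :: "'k::field hA" where "oneA = bvec (False, False, False)"
definition gA :: "'k::field hA" where "gA = bvec (True, False, False)"
definition xA :: "'k::field hA" where "xA = bvec (False, True, False)"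
definition yA :: "'k::field hA" where "yA = bvec (False, False, True)"

text \<open>Product of basis monomials, using gx=-xg, gy=-yg, xy=-yx, g^2=1, x^2=y^2=0:
  (g^i x^j y^k)(g^i' x^j' y^k') = (-1)^(i'(j+k) + k j') g^(i+i') x^(j+j') y^(k+k').\<close>
definition multB :: "bidx \<Rightarrow> bidx \<Rightarrow> 'k::field hA" where
  "multB b b' = (case b of (i, j, k) \<Rightarrow> case b' of (i', j', k') \<Rightarrow>
     (if (j \<and> j') \<or> (k \<and> k') then (\<lambda>_. 0)
      else (\<lambda>c. (-1) ^ (ex i' * (ex j + ex k) + ex k * ex j') * bvec (i \<noteq> i', j \<or> j', k \<or> k') c)))"

definition multA :: "'k::field hA \<Rightarrow> 'k hA \<Rightarrow> 'k hA" where
  "multA v w = (\<lambda>c. \<Sum>b\<in>UNIV. \<Sum>b'\<in>UNIV. v b * w b' * multB b b' c)"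

definition addA :: "'k::field hA \<Rightarrow> 'k hA \<Rightarrow> 'k hA" where
  "addA v w = (\<lambda>c. v c + w c)"

definition smultA :: "'k::field \<Rightarrow> 'k hA \<Rightarrow> 'k hA" where
  "smultA s v = (\<lambda>c. s * v c)"

definition tens :: "'k::field hA \<Rightarrow> 'k hA \<Rightarrow> 'k hAA" where
  "tens v w = (\<lambda>(b1, b2). v b1 * w b2)"

definition multAA :: "'k::field hAA \<Rightarrow> 'k hAA \<Rightarrow> 'k hAA" where
  "multAA t s = (\<lambda>(c1, c2). \<Sum>b1\<in>UNIV. \<Sum>b2\<in>UNIV. \<Sum>b1'\<in>UNIV. \<Sum>b2'\<in>UNIV.
      t (b1, b2) * s (b1', b2') * multB b1 b1' c1 * multB b2 b2' c2)"

definition pwA :: "'k::field hA \<Rightarrow> bool \<Rightarrow> 'k hA" where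
  "pwA v e = (if e then v else oneA)"

definition pwAA :: "'k::field hAA \<Rightarrow> bool \<Rightarrow> 'k hAA" where
  "pwAA t e = (if e then t else tens oneA oneA)"

definition DeltaB :: "bidx \<Rightarrow> 'k::field hAA" where
  "DeltaB b = (case b of (i, j, k) \<Rightarrow>
     multAA (multAA (pwAA (tens gA gA) i)
                    (pwAA (\<lambda>p. tens xA gA p + tens oneA xA p) j))
            (pwAA (\<lambda>p. tens yA gA p + tens oneA yA p) k))"

definition epsA :: "'k::field hA \<Rightarrow> 'k" where
  "epsA v = (\<Sum>b\<in>UNIV. (case b of (i, j, k) \<Rightarrow> if \<not> j \<and> \<not> k then v b else 0))"

text \<open>Antipode: anti-algebra map with S(g)=g, S(x)=gx, S(y)=gy:
  S(g^i x^j y^k) = S(y)^k S(x)^j S(g)^i.\<close>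
definition SB :: "bidx \<Rightarrow> 'k::field hA" where
  "SB b = (case b of (i, j, k) \<Rightarrow>
     multA (multA (pwA (multA gA yA) k) (pwA (multA gA xA) j)) (pwA gA i))"

definition SA :: "'k::field hA \<Rightarrow> 'k hA" where
  "SA v = (\<lambda>c. \<Sum>b\<in>UNIV. v b * SB b c)"

definition tauB :: "'k::field \<Rightarrow> 'k \<Rightarrow> 'k \<Rightarrow> 'k \<Rightarrow> bidx \<Rightarrow> 'k hA" where
  "tauB a b c d bb = (case bb of (i, j, k) \<Rightarrow>
     multA (multA (pwA gA i) (pwA (addA (smultA a xA) (smultA b yA)) j))
           (pwA (addA (smultA c xA) (smultA d yA)) k))"

definition tauA :: "'k::field \<Rightarrow> 'k \<Rightarrow> 'k \<Rightarrow> 'k \<Rightarrow> 'k hA \<Rightarrow> 'k hA" where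
  "tauA a b c d v = (\<lambda>e. \<Sum>bb\<in>UNIV. v bb * tauB a b c d bb e)"

definition conv :: "('k::field hA \<Rightarrow> 'k hA) \<Rightarrow> ('k hA \<Rightarrow> 'k hA) \<Rightarrow> 'k hA \<Rightarrow> 'k hA" where
  "conv f1 f2 v = (\<lambda>e. \<Sum>b\<in>UNIV. v b * (\<Sum>b1\<in>UNIV. \<Sum>b2\<in>UNIV.
       DeltaB b (b1, b2) * multA (f1 (bvec b1)) (f2 (bvec b2)) e))"

text \<open>Iterated convolution: conv_list [f1,...,fn] h = sum f1(h_1) ... fn(h_n)
  (well defined by coassociativity); the empty convolution is the unit u o epsilon.\<close>
fun conv_list :: "('k::field hA \<Rightarrow> 'k hA) list \<Rightarrow> 'k hA \<Rightarrow> 'k hA" where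
  "conv_list [] = (\<lambda>v. smultA (epsA v) oneA)"
| "conv_list [f] = f"
| "conv_list (f # fs) = conv f (conv_list fs)"

text \<open>P_{m-1,tau}(h) = sum (tau^(m-1) h_1)(tau^(m-2) h_2) ... (tau h_(m-1)).\<close>
definition Pmap :: "nat \<Rightarrow> ('k::field hA \<Rightarrow> 'k hA) \<Rightarrow> 'k hA \<Rightarrow> 'k hA" where
  "Pmap m tau = conv_list (map (\<lambda>i. tau ^^ i) (rev [1..<m]))"

definition traceA :: "('k::field hA \<Rightarrow> 'k hA) \<Rightarrow> 'k" where
  "traceA f = (\<Sum>b\<in>UNIV. f (bvec b) b)"

definition nu :: "nat \<Rightarrow> ('k::field hA \<Rightarrow> 'k hA) \<Rightarrow> 'k" where
  "nu m tau = traceA (SA \<circ> Pmap m tau)"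

end

theory Submission
  imports Defs
begin

lemma sum_bidx: "(\<Sum>b\<in>(UNIV::bidx set). f b) =
  f (False,False,False) + f (False,False,True) + f (False,True,False) + f (False,True,True) +
  f (True,False,False) + f (True,False,True) + f (True,True,False) + f (True,True,True)"
proof -
  have U: "(UNIV::bidx set) = {(False,False,False), (False,False,True), (False,True,False), (False,True,True),
    (True,False,False), (True,False,True), (True,True,False), (True,True,True)}"
    by (auto simp: UNIV_bool)
  show ?thesis unfolding U by (simp add: add.assoc)
qed

definition V :: "'k \<Rightarrow> 'k \<Rightarrow> 'k \<Rightarrow> 'k \<Rightarrow> 'k \<Rightarrow> 'k \<Rightarrow> 'k \<Rightarrow> 'k \<Rightarrow> bidx \<Rightarrow> 'k" where
  "V p0 p1 p2 p3 p4 p5 p6 p7 = (\<lambda>(i,j,k). if i then (if j then (if k then p7 else p6) else (if k then p5 else p4))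
      else (if j then (if k then p3 else p2) else (if k then p1 else p0)))"

lemma V_simps[simp]:
  "V p0 p1 p2 p3 p4 p5 p6 p7 (False,False,False) = p0"
  "V p0 p1 p2 p3 p4 p5 p6 p7 (False,False,True) = p1"
  "V p0 p1 p2 p3 p4 p5 p6 p7 (False,True,False) = p2"
  "V p0 p1 p2 p3 p4 p5 p6 p7 (False,True,True) = p3"
  "V p0 p1 p2 p3 p4 p5 p6 p7 (True,False,False) = p4"
  "V p0 p1 p2 p3 p4 p5 p6 p7 (True,False,True) = p5"
  "V p0 p1 p2 p3 p4 p5 p6 p7 (True,True,False) = p6"
  "V p0 p1 p2 p3 p4 p5 p6 p7 (True,True,True) = p7"
  by (simp_all add: V_def)

lemma V_eq_iff: "V p0 p1 p2 p3 p4 p5 p6 p7 = V q0 q1 q2 q3 q4 q5 q6 q7 \<longleftrightarrow>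
   p0 = q0 \<and> p1 = q1 \<and> p2 = q2 \<and> p3 = q3 \<and> p4 = q4 \<and> p5 = q5 \<and> p6 = q6 \<and> p7 = q7"
  apply (rule iffI)
   apply (metis V_simps)
  by simp

lemma V_all: "(v::bidx \<Rightarrow> 'k) = V (v (False,False,False)) (v (False,False,True)) (v (False,True,False)) (v (False,True,True))
   (v (True,False,False)) (v (True,False,True)) (v (True,True,False)) (v (True,True,True))"
  by (rule ext) (auto simp: V_def)

lemma V_add: "(\<lambda>e. V p0 p1 p2 p3 p4 p5 p6 p7 e + V q0 q1 q2 q3 q4 q5 q6 q7 e) =
   V (p0+q0) (p1+q1) (p2+q2) (p3+q3) (p4+q4) (p5+q5) (p6+q6) (p7+q7)"
  by (rule ext) (auto simp: V_def)

lemma V_diff: "(\<lambda>e. V p0 p1 p2 p3 p4 p5 p6 p7 e - V q0 q1 q2 q3 q4 q5 q6 q7 e) =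
   V (p0-q0) (p1-q1) (p2-q2) (p3-q3) (p4-q4) (p5-q5) (p6-q6) (p7-q7)"
  by (rule ext) (auto simp: V_def)

lemma bvec_V:
  "bvec (False,False,False) = V 1 0 0 0 0 0 0 0"
  "bvec (False,False,True) = V 0 1 0 0 0 0 0 0"
  "bvec (False,True,False) = V 0 0 1 0 0 0 0 0"
  "bvec (False,True,True) = V 0 0 0 1 0 0 0 0"
  "bvec (True,False,False) = V 0 0 0 0 1 0 0 0"
  "bvec (True,False,True) = V 0 0 0 0 0 1 0 0"
  "bvec (True,True,False) = V 0 0 0 0 0 0 1 0"
  "bvec (True,True,True) = V 0 0 0 0 0 0 0 1"
  by (subst V_all, simp add: bvec_def)+

lemma multA_V: "multA (V p0 p1 p2 p3 p4 p5 p6 p7) (V q0 q1 q2 q3 q4 q5 q6 q7) =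
  V (p0 * q0 + p4 * q4)
(p0 * q1 + p1 * q0 + p4 * q5 - p5 * q4)
(p0 * q2 + p2 * q0 + p4 * q6 - p6 * q4)
(p0 * q3 - p1 * q2 + p2 * q1 + p3 * q0 + p4 * q7 + p5 * q6 - p6 * q5 + p7 * q4)
(p0 * q4 + p4 * q0)
(p0 * q5 - p1 * q4 + p4 * q1 + p5 * q0)
(p0 * q6 - p2 * q4 + p4 * q2 + p6 * q0)
(p0 * q7 + p1 * q6 - p2 * q5 + p3 * q4 + p4 * q3 - p5 * q2 + p6 * q1 + p7 * q0)"
  apply (rule ext)
  apply (simp add: multA_def sum_bidx multB_def ex_def split_beta)
  apply (auto simp: V_def bvec_def split_beta algebra_simps)
  done



lemma multAA_tens: "multAA (tens u v) (tens u' v') = tens (multA u u') (multA v v')"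
proof (rule ext, clarify)
  fix c1 c2
  have "multAA (tens u v) (tens u' v') (c1,c2) =
    (\<Sum>b1\<in>UNIV. \<Sum>b2\<in>UNIV. \<Sum>b1'\<in>UNIV. \<Sum>b2'\<in>UNIV.
      (u b1 * u' b1' * multB b1 b1' c1) * (v b2 * v' b2' * multB b2 b2' c2))"
    unfolding multAA_def tens_def by (simp add: algebra_simps)
  also have "\<dots> = tens (multA u u') (multA v v') (c1,c2)"
    unfolding tens_def multA_def by (simp add: sum_product)
  finally show "multAA (tens u v) (tens u' v') (c1,c2) = tens (multA u u') (multA v v') (c1,c2)" .
qed

lemma multAA_addL: "multAA (\<lambda>p. t p + t' p) s = (\<lambda>p. multAA t s p + multAA t' s p)"
  unfolding multAA_def by (rule ext) (simp add: split_beta algebra_simps sum.distrib)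

lemma multAA_addR: "multAA s (\<lambda>p. t p + t' p) = (\<lambda>p. multAA s t p + multAA s t' p)"
  unfolding multAA_def by (rule ext) (simp add: split_beta algebra_simps sum.distrib)

lemma V_consts:
  "oneA = V 1 0 0 0 0 0 0 0" "gA = V 0 0 0 0 1 0 0 0" "xA = V 0 0 1 0 0 0 0 0" "yA = V 0 1 0 0 0 0 0 0"
  by (simp_all add: oneA_def gA_def xA_def yA_def bvec_V)

lemma Delta_vals:
  "DeltaB (False,False,False) = tens oneA oneA"
  "DeltaB (False,False,True) = (\<lambda>p. tens yA gA p + tens oneA yA p)"
  "DeltaB (False,True,False) = (\<lambda>p. tens xA gA p + tens oneA xA p)"
  "DeltaB (True,False,False) = tens gA gA"
  by (simp_all add: DeltaB_def pwAA_def multAA_tens multAA_addL multAA_addR multA_V V_consts)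

lemma conv_bvec_gen: "conv f1 f2 (bvec b0) = (\<lambda>e. \<Sum>b1\<in>UNIV. \<Sum>b2\<in>UNIV. DeltaB b0 (b1,b2) * multA (f1 (bvec b1)) (f2 (bvec b2)) e)"
proof -
  have "\<And>X. (\<Sum>b\<in>UNIV. bvec b0 b * X b) = (X b0 :: 'a::field)"
  proof -
    fix X :: "bidx \<Rightarrow> 'a"
    have "(\<Sum>b\<in>UNIV. bvec b0 b * X b) = (\<Sum>b\<in>UNIV. if b = b0 then X b else 0)"
      by (rule sum.cong) (auto simp: bvec_def)
    then show "(\<Sum>b\<in>UNIV. bvec b0 b * X b) = X b0" by simp
  qed
  then show ?thesis unfolding conv_def by simp
qed

definition addF :: "'k::field hA \<Rightarrow> 'k hA \<Rightarrow> 'k hA" where "addF f g = (\<lambda>e. f e + g e)"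
definition subF :: "'k::field hA \<Rightarrow> 'k hA \<Rightarrow> 'k hA" where "subF f g = (\<lambda>e. f e - g e)"

lemma addF_V[simp]: "addF (V p0 p1 p2 p3 p4 p5 p6 p7) (V q0 q1 q2 q3 q4 q5 q6 q7) =
   V (p0+q0) (p1+q1) (p2+q2) (p3+q3) (p4+q4) (p5+q5) (p6+q6) (p7+q7)"
  unfolding addF_def by (rule V_add)
lemma subF_V[simp]: "subF (V p0 p1 p2 p3 p4 p5 p6 p7) (V q0 q1 q2 q3 q4 q5 q6 q7) =
   V (p0-q0) (p1-q1) (p2-q2) (p3-q3) (p4-q4) (p5-q5) (p6-q6) (p7-q7)"
  unfolding subF_def by (rule V_diff)

lemma conv_bvec0: "conv f1 f2 (bvec (False,False,False)) = multA (f1 (V 1 0 0 0 0 0 0 0)) (f2 (V 1 0 0 0 0 0 0 0))"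
  unfolding addF_def subF_def
  apply (simp only: conv_bvec_gen)
  apply (simp add: DeltaB_def pwAA_def multAA_tens multAA_addL multAA_addR multA_V V_consts)
  apply (simp add: tens_def sum_bidx bvec_V)
  done

lemma conv_bvec1: "conv f1 f2 (bvec (False,False,True)) = addF (multA (f1 (V 1 0 0 0 0 0 0 0)) (f2 (V 0 1 0 0 0 0 0 0))) (multA (f1 (V 0 1 0 0 0 0 0 0)) (f2 (V 0 0 0 0 1 0 0 0)))"
  unfolding addF_def subF_def
  apply (simp only: conv_bvec_gen)
  apply (simp add: DeltaB_def pwAA_def multAA_tens multAA_addL multAA_addR multA_V V_consts)
  apply (simp add: tens_def sum_bidx bvec_V)
  done

lemma conv_bvec2: "conv f1 f2 (bvec (False,True,False)) = addF (multA (f1 (V 1 0 0 0 0 0 0 0)) (f2 (V 0 0 1 0 0 0 0 0))) (multA (f1 (V 0 0 1 0 0 0 0 0)) (f2 (V 0 0 0 0 1 0 0 0)))"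
  unfolding addF_def subF_def
  apply (simp only: conv_bvec_gen)
  apply (simp add: DeltaB_def pwAA_def multAA_tens multAA_addL multAA_addR multA_V V_consts)
  apply (simp add: tens_def sum_bidx bvec_V)
  done

lemma conv_bvec3: "conv f1 f2 (bvec (False,True,True)) = addF (addF (subF (multA (f1 (V 1 0 0 0 0 0 0 0)) (f2 (V 0 0 0 1 0 0 0 0))) (multA (f1 (V 0 1 0 0 0 0 0 0)) (f2 (V 0 0 0 0 0 0 1 0)))) (multA (f1 (V 0 0 1 0 0 0 0 0)) (f2 (V 0 0 0 0 0 1 0 0)))) (multA (f1 (V 0 0 0 1 0 0 0 0)) (f2 (V 1 0 0 0 0 0 0 0)))"
  unfolding addF_def subF_def
  apply (simp only: conv_bvec_gen)
  apply (simp add: DeltaB_def pwAA_def multAA_tens multAA_addL multAA_addR multA_V V_consts)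
  apply (simp add: tens_def sum_bidx bvec_V)
  done

lemma conv_bvec4: "conv f1 f2 (bvec (True,False,False)) = multA (f1 (V 0 0 0 0 1 0 0 0)) (f2 (V 0 0 0 0 1 0 0 0))"
  unfolding addF_def subF_def
  apply (simp only: conv_bvec_gen)
  apply (simp add: DeltaB_def pwAA_def multAA_tens multAA_addL multAA_addR multA_V V_consts)
  apply (simp add: tens_def sum_bidx bvec_V)
  done

lemma conv_bvec5: "conv f1 f2 (bvec (True,False,True)) = addF (multA (f1 (V 0 0 0 0 1 0 0 0)) (f2 (V 0 0 0 0 0 1 0 0))) (multA (f1 (V 0 0 0 0 0 1 0 0)) (f2 (V 1 0 0 0 0 0 0 0)))"
  unfolding addF_def subF_def
  apply (simp only: conv_bvec_gen)
  apply (simp add: DeltaB_def pwAA_def multAA_tens multAA_addL multAA_addR multA_V V_consts)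
  apply (simp add: tens_def sum_bidx bvec_V)
  done

lemma conv_bvec6: "conv f1 f2 (bvec (True,True,False)) = addF (multA (f1 (V 0 0 0 0 1 0 0 0)) (f2 (V 0 0 0 0 0 0 1 0))) (multA (f1 (V 0 0 0 0 0 0 1 0)) (f2 (V 1 0 0 0 0 0 0 0)))"
  unfolding addF_def subF_def
  apply (simp only: conv_bvec_gen)
  apply (simp add: DeltaB_def pwAA_def multAA_tens multAA_addL multAA_addR multA_V V_consts)
  apply (simp add: tens_def sum_bidx bvec_V)
  done

lemma conv_bvec7: "conv f1 f2 (bvec (True,True,True)) = addF (addF (subF (multA (f1 (V 0 0 0 0 1 0 0 0)) (f2 (V 0 0 0 0 0 0 0 1))) (multA (f1 (V 0 0 0 0 0 1 0 0)) (f2 (V 0 0 1 0 0 0 0 0)))) (multA (f1 (V 0 0 0 0 0 0 1 0)) (f2 (V 0 1 0 0 0 0 0 0)))) (multA (f1 (V 0 0 0 0 0 0 0 1)) (f2 (V 0 0 0 0 1 0 0 0)))"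
  unfolding addF_def subF_def
  apply (simp only: conv_bvec_gen)
  apply (simp add: DeltaB_def pwAA_def multAA_tens multAA_addL multAA_addR multA_V V_consts)
  apply (simp add: tens_def sum_bidx bvec_V)
  done

lemmas conv_bvec = conv_bvec0 conv_bvec1 conv_bvec2 conv_bvec3 conv_bvec4 conv_bvec5 conv_bvec6 conv_bvec7

lemma fun_eq_bidx: "f = g \<longleftrightarrow> f (False,False,False) = g (False,False,False) \<and> f (False,False,True) = g (False,False,True) \<and>
  f (False,True,False) = g (False,True,False) \<and> f (False,True,True) = g (False,True,True) \<and>
  f (True,False,False) = g (True,False,False) \<and> f (True,False,True) = g (True,False,True) \<and>
  f (True,True,False) = g (True,True,False) \<and> f (True,True,True) = g (True,True,True)"
  by (metis V_all)

lemma addA_V: "addA (V p0 p1 p2 p3 p4 p5 p6 p7) (V q0 q1 q2 q3 q4 q5 q6 q7) =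
   V (p0+q0) (p1+q1) (p2+q2) (p3+q3) (p4+q4) (p5+q5) (p6+q6) (p7+q7)"
  unfolding addA_def by (rule V_add)

lemma smultA_V: "smultA s (V p0 p1 p2 p3 p4 p5 p6 p7) = V (s*p0) (s*p1) (s*p2) (s*p3) (s*p4) (s*p5) (s*p6) (s*p7)"
  unfolding smultA_def by (subst fun_eq_bidx) simp

lemma tauB_vals:
  "tauB a b c d (False,False,False) = V 1 0 0 0 0 0 0 0"
  "tauB a b c d (False,False,True) = V 0 d c 0 0 0 0 0"
  "tauB a b c d (False,True,False) = V 0 b a 0 0 0 0 0"
  "tauB a b c d (False,True,True) = V 0 0 0 (a*d-b*c) 0 0 0 0"
  "tauB a b c d (True,False,False) = V 0 0 0 0 1 0 0 0"
  "tauB a b c d (True,False,True) = V 0 0 0 0 0 d c 0"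
  "tauB a b c d (True,True,False) = V 0 0 0 0 0 b a 0"
  "tauB a b c d (True,True,True) = V 0 0 0 0 0 0 0 (a*d-b*c)"
  by (simp_all add: tauB_def pwA_def V_consts addA_V smultA_V multA_V V_eq_iff algebra_simps)

lemma tauA_V: "tauA a b c d (V p0 p1 p2 p3 p4 p5 p6 p7) =
  V p0 (d*p1 + b*p2) (c*p1 + a*p2) ((a*d-b*c)*p3) p4 (d*p5 + b*p6) (c*p5 + a*p6) ((a*d-b*c)*p7)"
  unfolding tauA_def sum_bidx V_simps tauB_vals by (subst fun_eq_bidx) (simp add: algebra_simps)

lemma SB_vals:
  "SB (False,False,False) = V 1 0 0 0 0 0 0 0"
  "SB (False,False,True) = V 0 0 0 0 0 1 0 0"
  "SB (False,True,False) = V 0 0 0 0 0 0 1 0"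
  "SB (False,True,True) = V 0 0 0 1 0 0 0 0"
  "SB (True,False,False) = V 0 0 0 0 1 0 0 0"
  "SB (True,False,True) = V 0 (-1) 0 0 0 0 0 0"
  "SB (True,True,False) = V 0 0 (-1) 0 0 0 0 0"
  "SB (True,True,True) = V 0 0 0 0 0 0 0 1"
  by (simp_all add: SB_def pwA_def V_consts multA_V)

lemma SA_V: "SA (V p0 p1 p2 p3 p4 p5 p6 p7) = V p0 (-p5) (-p6) p3 p4 p1 p2 p7"
  unfolding SA_def sum_bidx V_simps SB_vals by (subst fun_eq_bidx) simp

lemmas conv_V = conv_bvec[unfolded bvec_V]

fun Lst :: "('k hA \<Rightarrow> 'k hA) \<Rightarrow> nat \<Rightarrow> ('k hA \<Rightarrow> 'k hA) list" where
  "Lst t 0 = [t]"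
| "Lst t (Suc n) = t # id # Lst t n"

lemma Lst_ne: "Lst t n \<noteq> []" by (cases n) auto

lemma conv_list_cons: "fs \<noteq> [] \<Longrightarrow> conv_list (f # fs) = conv f (conv_list fs)"
  by (cases fs) auto

lemma Q_form:
  fixes a b c d :: "'k::field"
  shows "conv_list (Lst (tauA a b c d) n) (V 1 0 0 0 0 0 0 0) = V 1 0 0 0 0 0 0 0 \<and>
    conv_list (Lst (tauA a b c d) n) (V 0 1 0 0 0 0 0 0) = V 0 (d*(of_nat n+1)) (c*(of_nat n+1)) 0 0 (-of_nat n) 0 0 \<and>
    conv_list (Lst (tauA a b c d) n) (V 0 0 1 0 0 0 0 0) = V 0 (b*(of_nat n+1)) (a*(of_nat n+1)) 0 0 0 (-of_nat n) 0 \<and>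
    conv_list (Lst (tauA a b c d) n) (V 0 0 0 1 0 0 0 0) = V 0 0 0 ((of_nat n+1)^2*(a*d-b*c) + of_nat n^2) 0 0 0 (-of_nat n*(of_nat n+1)*(a+d)) \<and>
    conv_list (Lst (tauA a b c d) n) (V 0 0 0 0 1 0 0 0) = V 0 0 0 0 1 0 0 0 \<and>
    conv_list (Lst (tauA a b c d) n) (V 0 0 0 0 0 1 0 0) = V 0 (of_nat n) 0 0 0 (d*(of_nat n+1)) (c*(of_nat n+1)) 0 \<and>
    conv_list (Lst (tauA a b c d) n) (V 0 0 0 0 0 0 1 0) = V 0 0 (of_nat n) 0 0 (b*(of_nat n+1)) (a*(of_nat n+1)) 0 \<and>
    conv_list (Lst (tauA a b c d) n) (V 0 0 0 0 0 0 0 1) = V 0 0 0 (of_nat n*(of_nat n+1)*(a+d)) 0 0 0 ((of_nat n+1)^2*(a*d-b*c) + of_nat n^2)"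
proof (induction n)
  case 0
  then show ?case by (simp add: tauA_V)
next
  case (Suc n)
  show ?case
    apply (simp only: Lst.simps conv_list_cons Lst_ne list.distinct(1) not_False_eq_True)
    apply (simp add: conv_list_cons Lst_ne conv_V Suc.IH tauA_V multA_V V_add V_diff V_eq_iff)
    apply (simp add: algebra_simps power2_eq_square)
    done
qed

lemma funpow_even_id: "t \<circ> t = id \<Longrightarrow> t ^^ (2*k) = id"
  by (induction k) (auto simp: o_assoc)

lemma funpow_odd: "t \<circ> t = id \<Longrightarrow> t ^^ (Suc (2*k)) = t"
  by (simp add: funpow_even_id)

lemma map_Lst: "t \<circ> t = id \<Longrightarrow> map (\<lambda>i. t ^^ i) (rev [1..<2*n+2]) = Lst t n"
proof (induction n)
  case 0 then show ?case by simp
next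
  case (Suc n)
  have "[1..<2*Suc n+2] = [1..<2*n+2] @ [2*n+2, 2*n+3]"
    by (simp add: upt_Suc_append)
  moreover have "t ^^ (2*n+3) = t"
  proof -
    have e: "2*n+3 = Suc (2*Suc n)" by simp
    show ?thesis by (simp only: e funpow_odd[OF Suc.prems])
  qed
  moreover have "t ^^ (2*n+2) = id" using funpow_even_id[OF Suc.prems, of "Suc n"] by simp
  ultimately show ?case using Suc by simp
qed

lemma trace_sum: "traceA f = f (V 1 0 0 0 0 0 0 0) (False,False,False) + f (V 0 1 0 0 0 0 0 0) (False,False,True) +
  f (V 0 0 1 0 0 0 0 0) (False,True,False) + f (V 0 0 0 1 0 0 0 0) (False,True,True) +
  f (V 0 0 0 0 1 0 0 0) (True,False,False) + f (V 0 0 0 0 0 1 0 0) (True,False,True) +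
  f (V 0 0 0 0 0 0 1 0) (True,True,False) + f (V 0 0 0 0 0 0 0 1) (True,True,True)"
  unfolding traceA_def sum_bidx bvec_V ..

lemma nu_even:
  fixes a b c d :: "'k::field_char_0"
  assumes "tauA a b c d \<circ> tauA a b c d = id" "m > 0" "even m"
  shows "nu m (tauA a b c d) = of_nat m ^ 2 / 2 * (1 + (a * d - b * c))"
proof -
  from assms(3) obtain k where k: "m = 2*k" by (auto elim: evenE)
  with assms(2) have m: "m = 2*(k-1)+2" by simp
  define n where "n = k - 1"
  note m = m[folded n_def]
  have P: "Pmap m (tauA a b c d) = conv_list (Lst (tauA a b c d) n)"
    unfolding Pmap_def m using map_Lst[OF assms(1)] by simp
  have nu_eq: "nu m (tauA a b c d) = 2 * (of_nat n + 1)^2 * (1 + (a*d - b*c))"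
    unfolding nu_def P trace_sum using Q_form[of a b c d n]
    by (simp add: SA_V algebra_simps power2_eq_square)
  have mof: "(of_nat m :: 'k) = 2 * (of_nat n + 1)" by (simp add: m)
  have "(of_nat m :: 'k) ^ 2 / 2 = 2 * (of_nat n + 1)^2"
    unfolding mof by (simp add: power2_eq_square algebra_simps)
  then show ?thesis using nu_eq by simp
qed

lemma nu_three:
  fixes a b c d :: "'k::field"
  shows "nu 3 (tauA a b c d) = (a + d + (a * d - b * c)) ^ 2 + (a + d + 1) * (1 - (a * d - b * c))"
proof -
  have "rev [1..<3] = [2, 1::nat]" by (simp add: upt_rec)
  then have P: "Pmap 3 (tauA a b c d) = conv (tauA a b c d ^^ 2) (tauA a b c d)"
    unfolding Pmap_def by simp
  have T2: "tauA a b c d ^^ 2 = tauA a b c d \<circ> tauA a b c d" by (simp add: numeral_2_eq_2)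
  show ?thesis unfolding nu_def P T2 trace_sum
    apply (simp add: conv_V tauA_V multA_V SA_V)
    apply (simp add: algebra_simps power2_eq_square)
    done
qed

lemma alg_T: "(D::'k::field) = T^2 \<Longrightarrow> T * D = -1 \<Longrightarrow> (T + D)^2 + (T + 1) * (1 - D) = 0"
proof -
  assume h: "D = T^2" "T * D = -1"
  have "(T + D)^2 + (T + 1) * (1 - D) = (1 + T) * (T * D + 1)" unfolding h(1) by algebra
  then show ?thesis using h(2) by simp
qed

lemma alg3:
  fixes a b c d :: "'k::field_char_0"
  assumes e1: "d*(d*b+b*a)+b*(c*b+a*a) = 0" and e2: "c*(d*b+b*a)+a*(c*b+a*a) = 1"
    and e3: "d*(d*d+b*c)+b*(c*d+a*c) = 1" and e4: "c*(d*d+b*c)+a*(c*d+a*c) = 0"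
    and ne: "\<not> (a = 1 \<and> b = 0 \<and> c = 0 \<and> d = 1)"
  shows "(a + d + (a * d - b * c)) ^ 2 + (a + d + 1) * (1 - (a * d - b * c)) = 0"
proof -
  define t where "t = a*a + a*d + d*d + b*c"
  have h1: "t * b = 0" using e1 unfolding t_def by algebra
  have h2: "t * c = 0" using e4 unfolding t_def by algebra
  have h3: "t * a - (a+d)*(a*d-b*c) = 1" using e2 unfolding t_def by algebra
  have h4: "t * d - (a+d)*(a*d-b*c) = 1" using e3 unfolding t_def by algebra
  show ?thesis
  proof (cases "t = 0")
    case True
    have "a*d - b*c = (a+d)^2" using True unfolding t_def by algebra
    moreover have "(a+d) * (a*d-b*c) = -1" using h3 True by (simp add: minus_equation_iff)
    ultimately show ?thesis by (rule alg_T)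
  next
    case False
    have b0: "b = 0" and c0: "c = 0" using h1 h2 False by auto
    have "t * (a - d) = (t * a - (a+d)*(a*d-b*c)) - (t * d - (a+d)*(a*d-b*c))" by algebra
    then have "t * (a - d) = 0" using h3 h4 by simp
    then have ad: "d = a" using False by simp
    have a3: "a^3 = 1" using h3 unfolding t_def b0 c0 ad by algebra
    have "a \<noteq> 1" using ne b0 c0 ad by auto
    moreover have "(a - 1) * (a^2 + a + 1) = 0" using a3 by algebra
    ultimately have "a^2 + a + 1 = 0" by simp
    then show ?thesis unfolding b0 c0 ad by algebra
  qed
qed

lemma tau_id: "tauA 1 0 0 1 = (id :: 'k::field hA \<Rightarrow> 'k hA)"
proof
  fix v :: "'k hA"
  show "tauA 1 0 0 1 v = id v" by (subst (1 2) V_all) (simp add: tauA_V)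
qed

theorem proposition6p2:
  fixes a b c d :: "'k::field_char_0"
  assumes alg_closed: "\<forall>p::'k poly. degree p > 0 \<longrightarrow> (\<exists>z. poly p z = 0)"
    and invertible: "a * d - b * c \<noteq> 0"
  shows "(\<forall>m::nat. tauA a b c d \<circ> tauA a b c d = id \<and> m > 0 \<and> even m \<longrightarrow>
            nu m (tauA a b c d) = of_nat m ^ 2 / 2 * (1 + (a * d - b * c))
          \<and> (a * d - b * c = 1 \<longrightarrow> nu m (tauA a b c d) = of_nat m ^ 2)
          \<and> (a * d - b * c = -1 \<longrightarrow> nu m (tauA a b c d) = 0))
       \<and> (tauA a b c d ^^ 3 = id \<longrightarrow>
            nu 3 (tauA a b c d) = (a + d + (a * d - b * c)) ^ 2 + (a + d + 1) * (1 - (a * d - b * c))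
          \<and> (tauA a b c d = id \<longrightarrow> nu 3 (tauA a b c d) = 9)
          \<and> (tauA a b c d \<noteq> id \<longrightarrow> nu 3 (tauA a b c d) = 0))"
proof (intro conjI allI impI)
  fix m :: nat
  assume H: "tauA a b c d \<circ> tauA a b c d = id \<and> m > 0 \<and> even m"
  then show "nu m (tauA a b c d) = of_nat m ^ 2 / 2 * (1 + (a * d - b * c))"
    by (intro nu_even) auto
next
  fix m :: nat
  assume H: "tauA a b c d \<circ> tauA a b c d = id \<and> m > 0 \<and> even m" and h: "a * d - b * c = 1"
  from H have E: "nu m (tauA a b c d) = of_nat m ^ 2 / 2 * (1 + (a * d - b * c))"
    by (intro nu_even) auto
  show "nu m (tauA a b c d) = of_nat m ^ 2" unfolding E h by simp
next
  fix m :: nat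
  assume H: "tauA a b c d \<circ> tauA a b c d = id \<and> m > 0 \<and> even m" and h: "a * d - b * c = -1"
  from H have E: "nu m (tauA a b c d) = of_nat m ^ 2 / 2 * (1 + (a * d - b * c))"
    by (intro nu_even) auto
  show "nu m (tauA a b c d) = 0" unfolding E h by simp
next
  show "nu 3 (tauA a b c d) = (a + d + (a * d - b * c)) ^ 2 + (a + d + 1) * (1 - (a * d - b * c))"
    by (rule nu_three)
next
  assume I: "tauA a b c d = id"
  have "tauA a b c d (V 0 0 1 0 0 0 0 0) = V 0 0 1 0 0 0 0 0" "tauA a b c d (V 0 1 0 0 0 0 0 0) = V 0 1 0 0 0 0 0 0"
    using I by simp_all
  then have "a = 1" "b = 0" "c = 0" "d = 1" by (simp_all add: tauA_V V_eq_iff)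
  then show "nu 3 (tauA a b c d) = 9" by (simp add: nu_three)
next
  assume H3: "tauA a b c d ^^ 3 = id" and N: "tauA a b c d \<noteq> id"
  have ne: "\<not> (a = 1 \<and> b = 0 \<and> c = 0 \<and> d = 1)" using N tau_id by auto
  have "(tauA a b c d ^^ 3) (V 0 0 1 0 0 0 0 0) = V 0 0 1 0 0 0 0 0"
       "(tauA a b c d ^^ 3) (V 0 1 0 0 0 0 0 0) = V 0 1 0 0 0 0 0 0"
    using H3 by simp_all
  then have E1: "tauA a b c d (tauA a b c d (tauA a b c d (V 0 0 1 0 0 0 0 0))) = V 0 0 1 0 0 0 0 0"
    and E2: "tauA a b c d (tauA a b c d (tauA a b c d (V 0 1 0 0 0 0 0 0))) = V 0 1 0 0 0 0 0 0"
    by (simp_all add: numeral_3_eq_3)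
  have e12: "d*(d*b+b*a)+b*(c*b+a*a) = 0 \<and> c*(d*b+b*a)+a*(c*b+a*a) = 1"
    using E1 by (simp add: tauA_V V_eq_iff)
  have e34: "d*(d*d+b*c)+b*(c*d+a*c) = 1 \<and> c*(d*d+b*c)+a*(c*d+a*c) = 0"
    using E2 by (simp add: tauA_V V_eq_iff)
  show "nu 3 (tauA a b c d) = 0"
    unfolding nu_three using e12 e34 ne by (intro alg3) auto
qed

end
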